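(* Let $X$ be a finite $T_0$ topological space, let $\mathcal V$ be a multivector field on $X$ such that $X$ is invariant, and let $\mathcal M=\{M_p\mid p\in\mathbb P\}$ be a Morse predecomposition of $X$. If among the admissible preorders on $\mathbb P$ there is a partial order, then the indexed family $\mathcal M':=\{M_{\{p\}}\mid p\in\mathbb P\}$ is a Morse decomposition of $X$.
   Context: Notation: $\operatorname{cl}$ is closure; $A\subset X$ is locally closed if $\operatorname{cl}A\setminus A$ is closed. A multivector field $\mathcal V$ on $X$ is a partition of $X$ into locally closed sets (multivectors); $[x]_{\mathcal V}$ is the multivector containing $x$. A multivector $V$ is critical if the relative singular homology $H(\operatorname{cl}V,\operatorname{cl}V\setminus V)$ is nontrivial, regular otherwise. $A$ is $\mathcal V$-compatible if it is a union of multivectors; the $\mathcal V$-hull $\langle A\rangle_{\mathcal V}$ is the smallest locally closed $\mathcal V$-compatible set containing $A$. Put $\Pi_{\mathcal V}(x)=\operatorname{cl}\{x\}\cup[x]_{\mathcal V}$. A solution is a partial map $\gamma:\mathbb Z\nrightarrow X$ whose domain is an interval of integers and $\gamma(t+1)\in\Pi_{\mathcal V}(\gamma(t))$ whenever $t,t+1\in\operatorname{dom}\gamma$; a path is a solution with finite domain; a full solution has domain $\mathbb Z$. For a full solution, $\alpha(\gamma)=\langle\bigcap_{t\in\mathbb Z,t\le0}\gamma((-\infty,t])\rangle_{\mathcal V}$ and $\omega(\gamma)=\langle\bigcap_{t\in\mathbb Z,t\ge0}\gamma([t,\infty))\rangle_{\mathcal V}$. A full solution is essential unless $\alpha(\gamma)$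 or $\omega(\gamma)$ is contained in a single regular multivector. An essential solution in $A$ is an essential full solution with image in $A$. For $S\subset X$, $\operatorname{Inv}S$ is the set of $x\in S$ such that some essential solution $\gamma$ in $S$ has $\gamma(0)=x$; $S$ is invariant if $\operatorname{Inv}S=S$. An invariant set $S$ is an isolated invariant set if there is a closed $N\supset\Pi_{\mathcal V}(S)$ such that every path in $N$ with both endpoints in $S$ has image in $S$. Links: for invariant $S_1,S_2$, a full solution $\gamma$ is a link from $S_1$ to $S_2$ if $\alpha(\gamma)\cap S_1\ne\emptyset\ne\omega(\gamma)\cap S_2$. Morse predecomposition of $X$: an indexed family $\mathcal M=\{M_p\mid p\in\mathbb P\}$ of mutually disjoint isolated invariant subsets of $X$ such that every essential solution in $X$ is a link from $M_p$ to $M_q$ for some $p,q\in\mathbb P$. A preorder $\le$ on $\mathbb P$ is admissible if the existence of a link from $M_p$ to $M_q$ implies $q\le p$. An invariant $T\subset X$ is saturated (in $X$) if every essential solution $\gamma$ in $X$ with $\alpha(\gamma)\subset T$ and $\omega(\gamma)\subset T$ has $\operatorname{im}\gamma\subset T$. A Morse decomposition of $X$ is a Morse predecomposition all of whose members are saturated and for which some admissible preorder is a partial order. For $C\subset X$ put $\mathbb P_C=\{p\in\mathbb P\mid M_p\cap C\neq\emptyset\}$. For $\mathbb Q\subset\mathbb P$, let $\operatorname{eSol}_{\mathbb Q}(X)$ be the set of essential solutions $\gamma$ in $X$ with $\mathbb P_{\alpha(\gamma)}\cap\mathbb Q\ne\emptyset\ne\mathbb P_{\omega(\gamma)}\cap\mathbb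 Q$, and $M_{\mathbb Q}:=\bigcup\{\operatorname{im}\gamma\mid\gamma\in\operatorname{eSol}_{\mathbb Q}(X)\}$. *)

theory Defs
  imports "HOL-Analysis.Analysis" "HOL-Homology.Homology"
begin

definition locally_closed :: "'a topology \<Rightarrow> 'a set \<Rightarrow> bool" where
  "locally_closed X A \<longleftrightarrow> A \<subseteq> topspace X \<and> closedin X (X closure_of A - A)"

definition multivector_field :: "'a topology \<Rightarrow> 'a set set \<Rightarrow> bool" where
  "multivector_field X V \<longleftrightarrow>
     \<Union>V = topspace X \<and> {} \<notin> V \<and>
     (\<forall>A\<in>V. \<forall>B\<in>V. A \<noteq> B \<longrightarrow> A \<inter> B = {}) \<and>
     (\<forall>A\<in>V. locally_closed X A)"

definition mv :: "'a set set \<Rightarrow> 'a \<Rightarrow> 'a set" where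
  "mv V x = (THE A. A \<in> V \<and> x \<in> A)"

definition critical :: "'a topology \<Rightarrow> 'a set \<Rightarrow> bool" where
  "critical X A \<longleftrightarrow>
     (\<exists>p. \<not> trivial_group
        (relative_homology_group p (subtopology X (X closure_of A)) (X closure_of A - A)))"

definition regular :: "'a topology \<Rightarrow> 'a set \<Rightarrow> bool" where
  "regular X A \<longleftrightarrow> \<not> critical X A"

definition compatible :: "'a set set \<Rightarrow> 'a set \<Rightarrow> bool" where
  "compatible V A \<longleftrightarrow> (\<exists>F\<subseteq>V. A = \<Union>F)"

definition vhull :: "'a topology \<Rightarrow> 'a set set \<Rightarrow> 'a set \<Rightarrow> 'a set" where
  "vhull X V A = \<Inter>{B. locally_closed X B \<and> compatible V B \<and> A \<subseteq> B}"

definition Pi_V :: "'a topology \<Rightarrow> 'a set set \<Rightarrow> 'a \<Rightarrow> 'a set" where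
  "Pi_V X V x = X closure_of {x} \<union> mv V x"

definition Pi_V_set :: "'a topology \<Rightarrow> 'a set set \<Rightarrow> 'a set \<Rightarrow> 'a set" where
  "Pi_V_set X V S = (\<Union>x\<in>S. Pi_V X V x)"

definition full_solution :: "'a topology \<Rightarrow> 'a set set \<Rightarrow> (int \<Rightarrow> 'a) \<Rightarrow> bool" where
  "full_solution X V g \<longleftrightarrow>
     (\<forall>t. g t \<in> topspace X) \<and> (\<forall>t. g (t + 1) \<in> Pi_V X V (g t))"

definition is_path :: "'a topology \<Rightarrow> 'a set set \<Rightarrow> (int \<Rightarrow> 'a) \<Rightarrow> int \<Rightarrow> int \<Rightarrow> bool" where
  "is_path X V g a b \<longleftrightarrow> a \<le> b \<and>
     (\<forall>t\<in>{a..b}. g t \<in> topspace X) \<and> (\<forall>t. a \<le> t \<and> t < b \<longrightarrow> g (t + 1) \<in> Pi_V X V (g t))"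

definition alpha_lim :: "'a topology \<Rightarrow> 'a set set \<Rightarrow> (int \<Rightarrow> 'a) \<Rightarrow> 'a set" where
  "alpha_lim X V g = vhull X V (\<Inter>t\<in>{..0}. g ` {..t})"

definition omega_lim :: "'a topology \<Rightarrow> 'a set set \<Rightarrow> (int \<Rightarrow> 'a) \<Rightarrow> 'a set" where
  "omega_lim X V g = vhull X V (\<Inter>t\<in>{0..}. g ` {t..})"

definition essential :: "'a topology \<Rightarrow> 'a set set \<Rightarrow> (int \<Rightarrow> 'a) \<Rightarrow> bool" where
  "essential X V g \<longleftrightarrow> full_solution X V g \<and>
     \<not> (\<exists>W\<in>V. regular X W \<and> alpha_lim X V g \<subseteq> W) \<and>
     \<not> (\<exists>W\<in>V. regular X W \<and> omega_lim X V g \<subseteq> W)"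

definition essential_in :: "'a topology \<Rightarrow> 'a set set \<Rightarrow> 'a set \<Rightarrow> (int \<Rightarrow> 'a) \<Rightarrow> bool" where
  "essential_in X V A g \<longleftrightarrow> essential X V g \<and> range g \<subseteq> A"

definition Inv :: "'a topology \<Rightarrow> 'a set set \<Rightarrow> 'a set \<Rightarrow> 'a set" where
  "Inv X V S = {x \<in> S. \<exists>g. essential_in X V S g \<and> g 0 = x}"

definition invariant :: "'a topology \<Rightarrow> 'a set set \<Rightarrow> 'a set \<Rightarrow> bool" where
  "invariant X V S \<longleftrightarrow> Inv X V S = S"

definition isolated_invariant :: "'a topology \<Rightarrow> 'a set set \<Rightarrow> 'a set \<Rightarrow> bool" where
  "isolated_invariant X V S \<longleftrightarrow> invariant X V S \<and>
     (\<exists>N. closedin X N \<and> Pi_V_set X V S \<subseteq> N \<and>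
        (\<forall>g a b. is_path X V g a b \<and> g ` {a..b} \<subseteq> N \<and> g a \<in> S \<and> g b \<in> S
                 \<longrightarrow> g ` {a..b} \<subseteq> S))"

definition is_link :: "'a topology \<Rightarrow> 'a set set \<Rightarrow> 'a set \<Rightarrow> 'a set \<Rightarrow> (int \<Rightarrow> 'a) \<Rightarrow> bool" where
  "is_link X V S1 S2 g \<longleftrightarrow> full_solution X V g \<and>
     alpha_lim X V g \<inter> S1 \<noteq> {} \<and> omega_lim X V g \<inter> S2 \<noteq> {}"

definition morse_predecomposition ::
  "'a topology \<Rightarrow> 'a set set \<Rightarrow> 'p set \<Rightarrow> ('p \<Rightarrow> 'a set) \<Rightarrow> bool" where
  "morse_predecomposition X V P M \<longleftrightarrow>
     (\<forall>p\<in>P. \<forall>q\<in>P. p \<noteq> q \<longrightarrow> M p \<inter> M q = {}) \<and>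
     (\<forall>p\<in>P. M p \<subseteq> topspace X \<and> isolated_invariant X V (M p)) \<and>
     (\<forall>g. essential_in X V (topspace X) g \<longrightarrow>
        (\<exists>p\<in>P. \<exists>q\<in>P. is_link X V (M p) (M q) g))"

definition admissible_preorder ::
  "'a topology \<Rightarrow> 'a set set \<Rightarrow> 'p set \<Rightarrow> ('p \<Rightarrow> 'a set) \<Rightarrow> ('p \<Rightarrow> 'p \<Rightarrow> bool) \<Rightarrow> bool" where
  "admissible_preorder X V P M rel \<longleftrightarrow>
     (\<forall>p\<in>P. rel p p) \<and>
     (\<forall>p\<in>P. \<forall>q\<in>P. \<forall>r\<in>P. rel p q \<and> rel q r \<longrightarrow> rel p r) \<and>
     (\<forall>p\<in>P. \<forall>q\<in>P. (\<exists>g. is_link X V (M p) (M q) g) \<longrightarrow> rel q p)"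

definition partial_order_on_set :: "'p set \<Rightarrow> ('p \<Rightarrow> 'p \<Rightarrow> bool) \<Rightarrow> bool" where
  "partial_order_on_set P rel \<longleftrightarrow>
     (\<forall>p\<in>P. rel p p) \<and>
     (\<forall>p\<in>P. \<forall>q\<in>P. \<forall>r\<in>P. rel p q \<and> rel q r \<longrightarrow> rel p r) \<and>
     (\<forall>p\<in>P. \<forall>q\<in>P. rel p q \<and> rel q p \<longrightarrow> p = q)"

definition saturated :: "'a topology \<Rightarrow> 'a set set \<Rightarrow> 'a set \<Rightarrow> bool" where
  "saturated X V T \<longleftrightarrow> invariant X V T \<and>
     (\<forall>g. essential_in X V (topspace X) g \<and> alpha_lim X V g \<subseteq> T \<and> omega_lim X V g \<subseteq> T
          \<longrightarrow> range g \<subseteq> T)"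

definition morse_decomposition ::
  "'a topology \<Rightarrow> 'a set set \<Rightarrow> 'p set \<Rightarrow> ('p \<Rightarrow> 'a set) \<Rightarrow> bool" where
  "morse_decomposition X V P M \<longleftrightarrow>
     morse_predecomposition X V P M \<and>
     (\<forall>p\<in>P. saturated X V (M p)) \<and>
     (\<exists>rel. admissible_preorder X V P M rel \<and> partial_order_on_set P rel)"

definition P_of :: "'p set \<Rightarrow> ('p \<Rightarrow> 'a set) \<Rightarrow> 'a set \<Rightarrow> 'p set" where
  "P_of P M C = {p \<in> P. M p \<inter> C \<noteq> {}}"

definition eSol :: "'a topology \<Rightarrow> 'a set set \<Rightarrow> 'p set \<Rightarrow> ('p \<Rightarrow> 'a set) \<Rightarrow> 'p set
                     \<Rightarrow> (int \<Rightarrow> 'a) set" where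
  "eSol X V P M Q = {g. essential_in X V (topspace X) g \<and>
      P_of P M (alpha_lim X V g) \<inter> Q \<noteq> {} \<and> P_of P M (omega_lim X V g) \<inter> Q \<noteq> {}}"

definition M_Q :: "'a topology \<Rightarrow> 'a set set \<Rightarrow> 'p set \<Rightarrow> ('p \<Rightarrow> 'a set) \<Rightarrow> 'p set \<Rightarrow> 'a set" where
  "M_Q X V P M Q = \<Union>{range g | g. g \<in> eSol X V P M Q}"

end

theory Submission
  imports Defs
begin

definition stp :: "'a topology \<Rightarrow> 'a set set \<Rightarrow> 'a \<Rightarrow> 'a \<Rightarrow> bool" where
  "stp X V x y \<longleftrightarrow> x \<in> topspace X \<and> y \<in> topspace X \<and> y \<in> Pi_V X V x"

definition btail :: "(int \<Rightarrow> 'a) \<Rightarrow> 'a set" where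
  "btail g = (\<Inter>t\<in>{..0}. g ` {..t})"

definition ftail :: "(int \<Rightarrow> 'a) \<Rightarrow> 'a set" where
  "ftail g = (\<Inter>t\<in>{0..}. g ` {t..})"

lemma btail_char: "btail g = {x. \<forall>t. \<exists>u\<le>t. g u = x}"
proof (intro equalityI subsetI)
  fix x assume "x \<in> btail g"
  then have h: "\<And>t. t \<le> 0 \<Longrightarrow> \<exists>u\<le>t. g u = x" unfolding btail_def by force
  show "x \<in> {x. \<forall>t. \<exists>u\<le>t. g u = x}"
  proof (intro CollectI allI)
    fix t :: int
    obtain u where "u \<le> min t 0" "g u = x" using h[of "min t 0"] by auto
    then show "\<exists>u\<le>t. g u = x" by auto
  qed
next
  fix x assume "x \<in> {x. \<forall>t. \<exists>u\<le>t. g u = x}"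
  then show "x \<in> btail g" unfolding btail_def by force
qed

lemma ftail_char: "ftail g = {x. \<forall>t. \<exists>u\<ge>t. g u = x}"
proof (intro equalityI subsetI)
  fix x assume "x \<in> ftail g"
  then have h: "\<And>t. t \<ge> 0 \<Longrightarrow> \<exists>u\<ge>t. g u = x" unfolding ftail_def by force
  show "x \<in> {x. \<forall>t. \<exists>u\<ge>t. g u = x}"
  proof (intro CollectI allI)
    fix t :: int
    obtain u where "u \<ge> max t 0" "g u = x" using h[of "max t 0"] by auto
    then show "\<exists>u\<ge>t. g u = x" by auto
  qed
next
  fix x assume "x \<in> {x. \<forall>t. \<exists>u\<ge>t. g u = x}"
  then show "x \<in> ftail g" unfolding ftail_def by force
qed

lemma btail_shift: "btail (\<lambda>t. g (t + k)) = btail g"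
proof -
  have "(\<forall>t. \<exists>u\<le>t. g (u + k) = x) \<longleftrightarrow> (\<forall>t. \<exists>u\<le>t. g u = x)" for x
  proof
    assume a: "\<forall>t. \<exists>u\<le>t. g (u + k) = x"
    show "\<forall>t. \<exists>u\<le>t. g u = x"
    proof
      fix t obtain u where "u \<le> t - k" "g (u + k) = x" using a by blast
      then show "\<exists>u\<le>t. g u = x" by (intro exI[of _ "u+k"]) auto
    qed
  next
    assume a: "\<forall>t. \<exists>u\<le>t. g u = x"
    show "\<forall>t. \<exists>u\<le>t. g (u + k) = x"
    proof
      fix t obtain u where "u \<le> t + k" "g u = x" using a by blast
      then show "\<exists>u\<le>t. g (u + k) = x" by (intro exI[of _ "u-k"]) auto
    qed
  qed
  then show ?thesis unfolding btail_char by auto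
qed

lemma ftail_shift: "ftail (\<lambda>t. g (t + k)) = ftail g"
proof -
  have "(\<forall>t. \<exists>u\<ge>t. g (u + k) = x) \<longleftrightarrow> (\<forall>t. \<exists>u\<ge>t. g u = x)" for x
  proof
    assume a: "\<forall>t. \<exists>u\<ge>t. g (u + k) = x"
    show "\<forall>t. \<exists>u\<ge>t. g u = x"
    proof
      fix t obtain u where "u \<ge> t - k" "g (u + k) = x" using a by blast
      then show "\<exists>u\<ge>t. g u = x" by (intro exI[of _ "u+k"]) auto
    qed
  next
    assume a: "\<forall>t. \<exists>u\<ge>t. g u = x"
    show "\<forall>t. \<exists>u\<ge>t. g (u + k) = x"
    proof
      fix t obtain u where "u \<ge> t + k" "g u = x" using a by blast
      then show "\<exists>u\<ge>t. g (u + k) = x" by (intro exI[of _ "u-k"]) auto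
    qed
  qed
  then show ?thesis unfolding ftail_char by auto
qed

lemma btail_cong: "(\<And>t. t \<le> 0 \<Longrightarrow> h t = g t) \<Longrightarrow> btail h = btail g"
  unfolding btail_def by (intro INF_cong refl image_cong) auto

lemma ftail_cong: "(\<And>t. t \<ge> 0 \<Longrightarrow> h t = g t) \<Longrightarrow> ftail h = ftail g"
  unfolding ftail_def by (intro INF_cong refl image_cong) auto

lemma fs_shift: "full_solution X V g \<Longrightarrow> full_solution X V (\<lambda>t. g (t + k))"
  unfolding full_solution_def by (metis add.commute add.left_commute)

lemma Pi_self: "w \<in> topspace X \<Longrightarrow> w \<in> Pi_V X V w"
  unfolding Pi_V_def using closure_of_subset[of "{w}" X] by auto

lemma ext_back:
  assumes "full_solution X V h" "stp X V (h 0) w"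
  shows "\<exists>h'. full_solution X V h' \<and> h' 0 = w \<and> btail h' = btail h"
proof -
  define h1 where "h1 t = (if t \<le> 0 then h t else w)" for t
  have "full_solution X V h1"
    unfolding full_solution_def
  proof (intro conjI allI)
    fix t show "h1 t \<in> topspace X" using assms unfolding full_solution_def h1_def stp_def by auto
    show "h1 (t + 1) \<in> Pi_V X V (h1 t)"
    proof (cases "t + 1 \<le> 0")
      case True then show ?thesis using assms unfolding full_solution_def h1_def by auto
    next
      case False
      then show ?thesis using assms unfolding full_solution_def h1_def stp_def
        by (cases "t = 0") (auto simp: Pi_self)
    qed
  qed
  moreover have "btail h1 = btail h" by (rule btail_cong) (simp add: h1_def)
  ultimately have "full_solution X V (\<lambda>t. h1 (t + 1)) \<and> h1 (0 + 1) = w \<and> btail (\<lambda>t. h1 (t + 1)) = btail h"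
    using fs_shift[of X V h1 1] btail_shift[of h1 1] by (simp add: h1_def[of 1])
  then show ?thesis by auto
qed

lemma ext_fwd:
  assumes "full_solution X V h" "stp X V w (h 0)"
  shows "\<exists>h'. full_solution X V h' \<and> h' 0 = w \<and> ftail h' = ftail h"
proof -
  define h1 where "h1 t = (if t \<ge> 0 then h t else w)" for t
  have "full_solution X V h1"
    unfolding full_solution_def
  proof (intro conjI allI)
    fix t show "h1 t \<in> topspace X" using assms unfolding full_solution_def h1_def stp_def by auto
    show "h1 (t + 1) \<in> Pi_V X V (h1 t)"
    proof (cases "t \<ge> 0")
      case True then show ?thesis using assms unfolding full_solution_def h1_def by auto
    next
      case False
      then show ?thesis using assms unfolding full_solution_def h1_def stp_def
        by (cases "t = -1") (auto simp: Pi_self)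
    qed
  qed
  moreover have "ftail h1 = ftail h" by (rule ftail_cong) (simp add: h1_def)
  ultimately have "full_solution X V (\<lambda>t. h1 (t + (-1))) \<and> h1 (0 + (-1)) = w \<and> ftail (\<lambda>t. h1 (t + (-1))) = ftail h"
    using fs_shift[of X V h1 "-1"] ftail_shift[of h1 "-1"] by (simp add: h1_def[of "-1"])
  then show ?thesis by auto
qed

lemma back_star:
  assumes "(stp X V)\<^sup>*\<^sup>* a w" "full_solution X V h" "h 0 = a"
  shows "\<exists>h'. full_solution X V h' \<and> h' 0 = w \<and> btail h' = btail h"
  using assms(1)
proof (induction rule: rtranclp_induct)
  case base then show ?case using assms by blast
next
  case (step y z)
  then obtain h' where "full_solution X V h'" "h' 0 = y" "btail h' = btail h" by blast
  then show ?case using ext_back[of X V h' z] step by auto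
qed

lemma fwd_star:
  assumes "(stp X V)\<^sup>*\<^sup>* w b" "full_solution X V h" "h 0 = b"
  shows "\<exists>h'. full_solution X V h' \<and> h' 0 = w \<and> ftail h' = ftail h"
  using assms(1)
proof (induction rule: converse_rtranclp_induct)
  case base then show ?case using assms by blast
next
  case (step y z)
  then obtain h' where "full_solution X V h'" "h' 0 = z" "ftail h' = ftail h" by blast
  then show ?case using ext_fwd[of X V h' y] step by auto
qed

lemma glue:
  assumes "full_solution X V h1" "full_solution X V h2" "h1 0 = h2 0"
  shows "\<exists>h. full_solution X V h \<and> h 0 = h1 0 \<and> btail h = btail h1 \<and> ftail h = ftail h2"
proof -
  define h where "h t = (if t \<le> 0 then h1 t else h2 t)" for t
  have "full_solution X V h"
    unfolding full_solution_def
  proof (intro conjI allI)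
    fix t show "h t \<in> topspace X" using assms unfolding full_solution_def h_def by auto
    have "h2 (0 + 1) \<in> Pi_V X V (h2 0)" using assms unfolding full_solution_def by blast
    then show "h (t + 1) \<in> Pi_V X V (h t)"
      using assms unfolding full_solution_def h_def
      by (cases "t = 0") auto
  qed
  moreover have "btail h = btail h1" by (rule btail_cong) (simp add: h_def)
  moreover have "ftail h = ftail h2" by (rule ftail_cong) (use assms in \<open>simp add: h_def\<close>)
  ultimately show ?thesis by (auto simp: h_def)
qed

lemma K:
  assumes "full_solution X V g1" "full_solution X V g2"
    "(stp X V)\<^sup>*\<^sup>* (g1 s1) z" "(stp X V)\<^sup>*\<^sup>* z (g2 s2)"
  shows "\<exists>h. full_solution X V h \<and> h 0 = z \<and> btail h = btail g1 \<and> ftail h = ftail g2"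
proof -
  obtain ha where a: "full_solution X V ha" "ha 0 = z" "btail ha = btail g1"
    using back_star[OF assms(3) fs_shift[OF assms(1), of s1]] btail_shift[of g1 s1] by auto
  obtain hb where b: "full_solution X V hb" "hb 0 = z" "ftail hb = ftail g2"
    using fwd_star[OF assms(4) fs_shift[OF assms(2), of s2]] ftail_shift[of g2 s2] by auto
  show ?thesis using glue[OF a(1) b(1)] a b by auto
qed


lemma mv_eq:
  assumes "multivector_field X V" "A \<in> V" "x \<in> A"
  shows "mv V x = A"
  unfolding mv_def
proof (rule the_equality)
  show "A \<in> V \<and> x \<in> A" using assms by auto
  fix B assume "B \<in> V \<and> x \<in> B"
  then show "B = A" using assms unfolding multivector_field_def by blast
qed

lemma mv_in:
  assumes "multivector_field X V" "x \<in> topspace X"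
  shows "mv V x \<in> V \<and> x \<in> mv V x"
proof -
  obtain A where "A \<in> V" "x \<in> A" using assms unfolding multivector_field_def by blast
  then show ?thesis using mv_eq[OF assms(1)] by auto
qed

lemma mv_sub:
  assumes "multivector_field X V" "x \<in> topspace X"
  shows "mv V x \<subseteq> topspace X"
  using mv_in[OF assms] assms(1) unfolding multivector_field_def by blast

lemma reach_fs:
  assumes "full_solution X V g" "s \<le> t"
  shows "(stp X V)\<^sup>*\<^sup>* (g s) (g t)"
  using assms(2)
proof (induction t rule: int_ge_induct)
  case base then show ?case by simp
next
  case (step i)
  have "stp X V (g i) (g (i + 1))" using assms(1) unfolding full_solution_def stp_def by blast
  then show ?case using step by (meson rtranclp.rtrancl_into_rtrancl)
qed

lemma reach_path:
  assumes "is_path X V g a b" "a \<le> s" "s \<le> t" "t \<le> b"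
  shows "(stp X V)\<^sup>*\<^sup>* (g s) (g t)"
  using assms(3,4)
proof (induction t rule: int_ge_induct)
  case base then show ?case by simp
next
  case (step i)
  have ai: "a \<le> i" "i < b" using assms(2) step(1,3) by auto
  then have "stp X V (g i) (g (i + 1))" using assms(1) unfolding is_path_def stp_def by auto
  moreover have "(stp X V)\<^sup>*\<^sup>* (g s) (g i)" using step ai by auto
  ultimately show ?case by (meson rtranclp.rtrancl_into_rtrancl)
qed

lemma btail_ne:
  assumes "finite (topspace X)" "full_solution X V g"
  shows "btail g \<noteq> {}"
proof
  assume "btail g = {}"
  then have "\<forall>x. \<exists>t. \<forall>u\<le>t. g u \<noteq> x" unfolding btail_char by auto
  then obtain f where f: "\<And>x u. u \<le> f x \<Longrightarrow> g u \<noteq> x" by metis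
  have rg: "range g \<subseteq> topspace X" using assms(2) unfolding full_solution_def by auto
  then have fin: "finite (f ` range g)" using assms(1) finite_subset by blast
  define t0 where "t0 = Min (f ` range g)"
  have "t0 \<le> f (g t0)" unfolding t0_def using fin by (intro Min_le) auto
  then show False using f by blast
qed

lemma ftail_ne:
  assumes "finite (topspace X)" "full_solution X V g"
  shows "ftail g \<noteq> {}"
proof
  assume "ftail g = {}"
  then have "\<forall>x. \<exists>t. \<forall>u\<ge>t. g u \<noteq> x" unfolding ftail_char by auto
  then obtain f where f: "\<And>x u. u \<ge> f x \<Longrightarrow> g u \<noteq> x" by metis
  have rg: "range g \<subseteq> topspace X" using assms(2) unfolding full_solution_def by auto
  then have fin: "finite (f ` range g)" using assms(1) finite_subset by blast
  define t0 where "t0 = Max (f ` range g)"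
  have "t0 \<ge> f (g t0)" unfolding t0_def using fin by (intro Max_ge) auto
  then show False using f by blast
qed

lemma btail_range: "btail g \<subseteq> range g" unfolding btail_char by auto
lemma ftail_range: "ftail g \<subseteq> range g" unfolding ftail_char by auto

lemma vhull_sup: "A \<subseteq> vhull X V A" unfolding vhull_def by auto

lemma cl_pts:
  assumes "finite S"
  shows "X closure_of S = (\<Union>s\<in>S. X closure_of {s})"
proof -
  have "S = \<Union>((\<lambda>s. {s}) ` S)" by auto
  then have "X closure_of S = X closure_of (\<Union>((\<lambda>s. {s}) ` S))" by simp
  also have "\<dots> = (\<Union>T\<in>(\<lambda>s. {s}) ` S. X closure_of T)"
    using assms by (intro closure_of_Union) auto
  also have "\<dots> = (\<Union>s\<in>S. X closure_of {s})" by auto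
  finally show ?thesis .
qed

lemma hull_R:
  assumes fin: "finite (topspace X)" and mvf: "multivector_field X V" and T: "T \<subseteq> topspace X"
  shows "vhull X V T \<subseteq> {z \<in> topspace X. (\<exists>a\<in>T. (stp X V)\<^sup>*\<^sup>* a z) \<and> (\<exists>b\<in>T. (stp X V)\<^sup>*\<^sup>* z b)}"
    (is "_ \<subseteq> ?R")
proof -
  have Rtop: "?R \<subseteq> topspace X" by auto
  have finR: "finite ?R" using fin finite_subset Rtop by blast
  have TR: "T \<subseteq> ?R" using T by auto
  have comp: "compatible V ?R"
    unfolding compatible_def
  proof (intro exI[of _ "mv V ` ?R"] conjI)
    show "mv V ` ?R \<subseteq> V" using mv_in[OF mvf] by auto
    show "?R = \<Union>(mv V ` ?R)"
    proof (intro equalityI subsetI)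
      fix z assume "z \<in> ?R" then show "z \<in> \<Union>(mv V ` ?R)" using mv_in[OF mvf] by blast
    next
      fix w assume "w \<in> \<Union>(mv V ` ?R)"
      then obtain z where z: "z \<in> ?R" "w \<in> mv V z" by auto
      have zt: "z \<in> topspace X" using z by auto
      have wt: "w \<in> topspace X" using mv_sub[OF mvf zt] z by auto
      have "mv V w = mv V z" using mv_eq[OF mvf _ z(2)] mv_in[OF mvf zt] by auto
      then have zw: "z \<in> mv V w" using mv_in[OF mvf zt] by auto
      have s1: "stp X V z w" unfolding stp_def Pi_V_def using zt wt z by auto
      have s2: "stp X V w z" unfolding stp_def Pi_V_def using zt wt zw by auto
      obtain a b where "a \<in> T" "(stp X V)\<^sup>*\<^sup>* a z" "b \<in> T" "(stp X V)\<^sup>*\<^sup>* z b" using z by auto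
      then have "(stp X V)\<^sup>*\<^sup>* a w" "(stp X V)\<^sup>*\<^sup>* w b"
        using s1 s2 by (auto intro: rtranclp.rtrancl_into_rtrancl converse_rtranclp_into_rtranclp)
      then show "w \<in> ?R" using wt \<open>a \<in> T\<close> \<open>b \<in> T\<close> by blast
    qed
  qed
  have lc: "locally_closed X ?R"
    unfolding locally_closed_def
  proof (intro conjI Rtop)
    let ?C = "X closure_of ?R - ?R"
    have finC: "finite ?C" using fin finite_subset closure_of_subset_topspace by blast
    have "X closure_of ?C \<subseteq> ?C"
    proof
      fix v assume "v \<in> X closure_of ?C"
      moreover have "X closure_of ?C = (\<Union>s\<in>?C. X closure_of {s})" by (rule cl_pts[OF finC])
      ultimately have "v \<in> (\<Union>s\<in>?C. X closure_of {s})" by simp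
      then obtain c where c: "c \<in> ?C" "v \<in> X closure_of {c}" by blast
      have "X closure_of {c} \<subseteq> X closure_of (X closure_of ?R)"
        using c(1) by (intro closure_of_mono) auto
      then have vcl: "v \<in> X closure_of ?R" using c(2) by auto
      have "v \<notin> ?R"
      proof
        assume vR: "v \<in> ?R"
        have "X closure_of ?R = (\<Union>s\<in>?R. X closure_of {s})" by (rule cl_pts[OF finR])
        then have "c \<in> (\<Union>s\<in>?R. X closure_of {s})" using c(1) by blast
        then obtain r where r: "r \<in> ?R" "c \<in> X closure_of {r}" by blast
        have ct: "c \<in> topspace X" using r(2) closure_of_subset_topspace[of X "{r}"] by blast
        have vt: "v \<in> topspace X" using vR by auto
        have s1: "stp X V r c" unfolding stp_def Pi_V_def using r ct by auto
        have s2: "stp X V c v" unfolding stp_def Pi_V_def using c(2) ct vt by auto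
        obtain a b where "a \<in> T" "(stp X V)\<^sup>*\<^sup>* a r" "b \<in> T" "(stp X V)\<^sup>*\<^sup>* v b" using r vR by auto
        then have "(stp X V)\<^sup>*\<^sup>* a c" "(stp X V)\<^sup>*\<^sup>* c b"
          using s1 s2 by (auto intro: rtranclp.rtrancl_into_rtrancl converse_rtranclp_into_rtranclp)
        then have "c \<in> ?R" using ct \<open>a \<in> T\<close> \<open>b \<in> T\<close> by blast
        then show False using c(1) by auto
      qed
      then show "v \<in> ?C" using vcl by auto
    qed
    moreover have "?C \<subseteq> topspace X" using closure_of_subset_topspace[of X ?R] by blast
    ultimately show "closedin X ?C" using closure_of_subset_eq[of ?C X] by blast
  qed
  show ?thesis unfolding vhull_def by (intro Inter_lower CollectI conjI lc comp TR)
qed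


lemma alpha_bt: "alpha_lim X V g = vhull X V (btail g)" unfolding alpha_lim_def btail_def ..
lemma omega_ft: "omega_lim X V g = vhull X V (ftail g)" unfolding omega_lim_def ftail_def ..

lemma eSol_p: "g \<in> eSol X V P M {p} \<longleftrightarrow> essential_in X V (topspace X) g \<and> p \<in> P \<and>
   M p \<inter> alpha_lim X V g \<noteq> {} \<and> M p \<inter> omega_lim X V g \<noteq> {}"
  unfolding eSol_def P_of_def by auto

lemma MQ_mem: "x \<in> M_Q X V P M Q \<longleftrightarrow> (\<exists>g\<in>eSol X V P M Q. x \<in> range g)"
  unfolding M_Q_def by blast

lemma K2:
  assumes "essential X V g1" "essential X V g2"
    "(stp X V)\<^sup>*\<^sup>* (g1 s1) z" "(stp X V)\<^sup>*\<^sup>* z (g2 s2)"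
  shows "\<exists>h. essential_in X V (topspace X) h \<and> h 0 = z \<and>
     alpha_lim X V h = alpha_lim X V g1 \<and> omega_lim X V h = omega_lim X V g2"
proof -
  have f: "full_solution X V g1" "full_solution X V g2" using assms unfolding essential_def by auto
  obtain h where h: "full_solution X V h" "h 0 = z" "btail h = btail g1" "ftail h = ftail g2"
    using K[OF f assms(3,4)] by blast
  have a: "alpha_lim X V h = alpha_lim X V g1" "omega_lim X V h = omega_lim X V g2"
    using h by (simp_all add: alpha_bt omega_ft)
  have "essential X V h" using assms(1,2) h(1) a unfolding essential_def by simp
  moreover have "range h \<subseteq> topspace X" using h(1) unfolding full_solution_def by auto
  ultimately show ?thesis using h(2) a unfolding essential_in_def by blast
qed

lemma convex:
  assumes "x \<in> M_Q X V P M {p}" "y \<in> M_Q X V P M {p}"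
    "(stp X V)\<^sup>*\<^sup>* x z" "(stp X V)\<^sup>*\<^sup>* z y"
  shows "z \<in> M_Q X V P M {p}"
proof -
  obtain g1 where g1': "g1 \<in> eSol X V P M {p}" "x \<in> range g1" using assms(1) unfolding MQ_mem by blast
  obtain s1 where s1: "x = g1 s1" using g1'(2) by blast
  obtain g2 where g2': "g2 \<in> eSol X V P M {p}" "y \<in> range g2" using assms(2) unfolding MQ_mem by blast
  obtain s2 where s2: "y = g2 s2" using g2'(2) by blast
  note g1 = g1'(1) s1
  note g2 = g2'(1) s2
  have e: "essential X V g1" "essential X V g2" using g1(1) g2(1)
    unfolding eSol_p essential_in_def by auto
  obtain h where h: "essential_in X V (topspace X) h" "h 0 = z"
     "alpha_lim X V h = alpha_lim X V g1" "omega_lim X V h = omega_lim X V g2"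
    using K2[OF e, of s1 z s2] assms(3,4) g1(2) g2(2) by blast
  have "h \<in> eSol X V P M {p}" using h g1(1) g2(1) unfolding eSol_p by simp
  then show ?thesis using h(2) unfolding MQ_mem by blast
qed

lemma linkrel:
  assumes adm: "admissible_preorder X V P M rel"
    and "x \<in> M_Q X V P M {p}" "y \<in> M_Q X V P M {q}" "(stp X V)\<^sup>*\<^sup>* x y"
  shows "rel q p"
proof -
  obtain g1 where g1': "g1 \<in> eSol X V P M {p}" "x \<in> range g1" using assms(2) unfolding MQ_mem by blast
  obtain s1 where s1: "x = g1 s1" using g1'(2) by blast
  obtain g2 where g2': "g2 \<in> eSol X V P M {q}" "y \<in> range g2" using assms(3) unfolding MQ_mem by blast
  obtain s2 where s2: "y = g2 s2" using g2'(2) by blast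
  note g1 = g1'(1) s1
  note g2 = g2'(1) s2
  have e: "essential X V g1" "essential X V g2" using g1(1) g2(1)
    unfolding eSol_p essential_in_def by auto
  obtain h where h: "essential_in X V (topspace X) h" "h 0 = x"
     "alpha_lim X V h = alpha_lim X V g1" "omega_lim X V h = omega_lim X V g2"
    using K2[OF e, of s1 x s2] assms(4) g1(2) g2(2) by blast
  have pq: "p \<in> P" "q \<in> P" using g1(1) g2(1) unfolding eSol_p by simp_all
  have "is_link X V (M p) (M q) h"
    using h g1(1) g2(1) unfolding eSol_p is_link_def essential_in_def essential_def
    by auto
  then show ?thesis using adm pq unfolding admissible_preorder_def by blast
qed

lemma M_sub:
  assumes fin: "finite (topspace X)" and "p \<in> P" and ii: "isolated_invariant X V (M p)"
  shows "M p \<subseteq> M_Q X V P M {p}"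
proof
  fix x assume x: "x \<in> M p"
  then obtain g where g: "essential_in X V (M p) g" "g 0 = x"
    using ii unfolding isolated_invariant_def invariant_def Inv_def by blast
  have fs: "full_solution X V g" and rg: "range g \<subseteq> M p" and ess: "essential X V g"
    using g(1) unfolding essential_in_def essential_def by auto
  have rt: "range g \<subseteq> topspace X" using fs unfolding full_solution_def by auto
  have "btail g \<noteq> {}" by (rule btail_ne[OF fin fs])
  moreover have "btail g \<subseteq> M p \<inter> alpha_lim X V g"
    using btail_range[of g] rg vhull_sup[of "btail g" X V] unfolding alpha_bt by blast
  ultimately have a: "M p \<inter> alpha_lim X V g \<noteq> {}" by blast
  have "ftail g \<noteq> {}" by (rule ftail_ne[OF fin fs])
  moreover have "ftail g \<subseteq> M p \<inter> omega_lim X V g"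
    using ftail_range[of g] rg vhull_sup[of "ftail g" X V] unfolding omega_ft by blast
  ultimately have o: "M p \<inter> omega_lim X V g \<noteq> {}" by blast
  have "g \<in> eSol X V P M {p}" using a o ess rt assms(2) unfolding eSol_p essential_in_def by simp
  then show "x \<in> M_Q X V P M {p}" using g(2) unfolding MQ_mem by blast
qed


lemma Pi_sub:
  assumes "multivector_field X V" "x \<in> topspace X"
  shows "Pi_V X V x \<subseteq> topspace X"
  unfolding Pi_V_def using closure_of_subset_topspace[of X "{x}"] mv_sub[OF assms] by blast

theorem corollary4p15:
  fixes X :: "'a topology" and V :: "'a set set" and P :: "'p set" and M :: "'p \<Rightarrow> 'a set"
  assumes "finite (topspace X)"
    and "t0_space X"
    and "multivector_field X V"
    and "invariant X V (topspace X)"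
    and "morse_predecomposition X V P M"
    and "\<exists>rel. admissible_preorder X V P M rel \<and> partial_order_on_set P rel"
  shows "morse_decomposition X V P (\<lambda>p. M_Q X V P M {p})"
proof -
  note fin = assms(1) and mvf = assms(3)
  obtain rel where adm: "admissible_preorder X V P M rel" and po: "partial_order_on_set P rel"
    using assms(6) by blast
  have iso: "\<And>p. p \<in> P \<Longrightarrow> isolated_invariant X V (M p)"
    using assms(5) unfolding morse_predecomposition_def by blast
  have lnk: "\<And>g. essential_in X V (topspace X) g \<Longrightarrow> \<exists>p\<in>P. \<exists>q\<in>P. is_link X V (M p) (M q) g"
    using assms(5) unfolding morse_predecomposition_def by blast
  define M' where "M' p = M_Q X V P M {p}" for p
  have Sub: "M p \<subseteq> M' p" if "p \<in> P" for p
    unfolding M'_def by (rule M_sub[where M=M and p=p and P=P, OF fin that iso[OF that]])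
  have D: "p = q" if "p \<in> P" "q \<in> P" "x \<in> M' p" "x \<in> M' q" for p q x
  proof -
    have "rel q p" using linkrel[OF adm, of x p x q] that unfolding M'_def by simp
    moreover have "rel p q" using linkrel[OF adm, of x q x p] that unfolding M'_def by simp
    ultimately show ?thesis using po that unfolding partial_order_on_set_def by blast
  qed
  have Top: "M' p \<subseteq> topspace X" for p
    unfolding M'_def M_Q_def eSol_def essential_in_def by blast
  have Inv': "invariant X V (M' p)" for p
    unfolding invariant_def Inv_def
  proof (intro equalityI subsetI)
    fix x assume x: "x \<in> {x \<in> M' p. \<exists>g. essential_in X V (M' p) g \<and> g 0 = x}"
    then show "x \<in> M' p" by blast
  next
    fix x assume x: "x \<in> M' p"
    obtain g where g: "g \<in> eSol X V P M {p}" "x \<in> range g" using x unfolding M'_def M_Q_def by blast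
    obtain s where s: "x = g s" using g(2) by blast
    have e: "essential X V g" using g(1) unfolding eSol_p essential_in_def by auto
    obtain h where h: "essential_in X V (topspace X) h" "h 0 = x"
      "alpha_lim X V h = alpha_lim X V g" "omega_lim X V h = omega_lim X V g"
      using K2[OF e e, of s x s] s by auto
    have hE: "h \<in> eSol X V P M {p}" using h g(1) unfolding eSol_p by simp
    then have "range h \<subseteq> M' p" unfolding M'_def M_Q_def by blast
    then have "essential_in X V (M' p) h" using h(1) unfolding essential_in_def by blast
    then show "x \<in> {x \<in> M' p. \<exists>g. essential_in X V (M' p) g \<and> g 0 = x}" using x h(2) by blast
  qed
  have Iso': "isolated_invariant X V (M' p)" for p
    unfolding isolated_invariant_def
  proof (intro conjI Inv' exI[of _ "topspace X"])
    show "closedin X (topspace X)" by simp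
    show "Pi_V_set X V (M' p) \<subseteq> topspace X"
      unfolding Pi_V_set_def using Pi_sub[OF mvf] Top by blast
    show "\<forall>g a b. is_path X V g a b \<and> g ` {a..b} \<subseteq> topspace X \<and> g a \<in> M' p \<and> g b \<in> M' p
        \<longrightarrow> g ` {a..b} \<subseteq> M' p"
    proof (intro allI impI subsetI)
      fix g a b y assume A: "is_path X V g a b \<and> g ` {a..b} \<subseteq> topspace X \<and> g a \<in> M' p \<and> g b \<in> M' p"
        and y: "y \<in> g ` {a..b}"
      obtain t where t: "t \<in> {a..b}" "y = g t" using y by blast
      have "(stp X V)\<^sup>*\<^sup>* (g a) (g t)" "(stp X V)\<^sup>*\<^sup>* (g t) (g b)"
        using reach_path[of X V g a b] A t(1) by auto
      then show "y \<in> M' p" using convex[of "g a" X V P M p "g b" "g t"] A t(2) unfolding M'_def by blast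
    qed
  qed
  have pre: "morse_predecomposition X V P M'"
    unfolding morse_predecomposition_def
  proof (intro conjI ballI allI impI)
    fix p q assume "p \<in> P" "q \<in> P" "p \<noteq> q"
    then show "M' p \<inter> M' q = {}" using D by blast
  next
    fix p assume "p \<in> P"
    show "M' p \<subseteq> topspace X" by (rule Top)
    show "isolated_invariant X V (M' p)" by (rule Iso')
  next
    fix g assume g: "essential_in X V (topspace X) g"
    obtain p q where pq: "p \<in> P" "q \<in> P" "is_link X V (M p) (M q) g" using lnk[OF g] by blast
    have "is_link X V (M' p) (M' q) g"
      using pq Sub[OF pq(1)] Sub[OF pq(2)] unfolding is_link_def by blast
    then show "\<exists>p\<in>P. \<exists>q\<in>P. is_link X V (M' p) (M' q) g" using pq by blast
  qed
  have sat: "saturated X V (M' p)" if p: "p \<in> P" for p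
    unfolding saturated_def
  proof (intro conjI Inv' allI impI)
    fix g assume A: "essential_in X V (topspace X) g \<and> alpha_lim X V g \<subseteq> M' p \<and> omega_lim X V g \<subseteq> M' p"
    obtain a b where ab: "a \<in> P" "b \<in> P" "is_link X V (M a) (M b) g" using lnk A by blast
    obtain y where y: "y \<in> alpha_lim X V g" "y \<in> M a" using ab(3) unfolding is_link_def by blast
    have "a = p" using D[OF ab(1) p, of y] y A Sub[OF ab(1)] by blast
    obtain z where z: "z \<in> omega_lim X V g" "z \<in> M b" using ab(3) unfolding is_link_def by blast
    have "b = p" using D[OF ab(2) p, of z] z A Sub[OF ab(2)] by blast
    have "g \<in> eSol X V P M {p}"
      using A ab(3) \<open>a = p\<close> \<open>b = p\<close> p unfolding eSol_p is_link_def by blast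
    then show "range g \<subseteq> M' p" unfolding M'_def M_Q_def by blast
  qed
  have adm': "admissible_preorder X V P M' rel"
    unfolding admissible_preorder_def
  proof (intro conjI)
    show "\<forall>p\<in>P. rel p p" "\<forall>p\<in>P. \<forall>q\<in>P. \<forall>r\<in>P. rel p q \<and> rel q r \<longrightarrow> rel p r"
      using po unfolding partial_order_on_set_def by blast+
    show "\<forall>p\<in>P. \<forall>q\<in>P. (\<exists>g. is_link X V (M' p) (M' q) g) \<longrightarrow> rel q p"
    proof (intro ballI impI)
      fix p q assume "p \<in> P" "q \<in> P" and "\<exists>g. is_link X V (M' p) (M' q) g"
      then obtain g where g: "is_link X V (M' p) (M' q) g" by blast
      have fs: "full_solution X V g" using g unfolding is_link_def by blast
      have rt: "range g \<subseteq> topspace X" using fs unfolding full_solution_def by auto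
      obtain y where y: "y \<in> alpha_lim X V g" "y \<in> M' p" using g unfolding is_link_def by blast
      obtain z where z: "z \<in> omega_lim X V g" "z \<in> M' q" using g unfolding is_link_def by blast
      have "y \<in> vhull X V (btail g)" using y(1) unfolding alpha_bt .
      then obtain b where b: "b \<in> btail g" "(stp X V)\<^sup>*\<^sup>* y b"
        using hull_R[OF fin mvf, of "btail g"] btail_range[of g] rt by blast
      have "b \<in> range g" using b(1) btail_range[of g] by blast
      then obtain s1 where s1: "b = g s1" by blast
      have "z \<in> vhull X V (ftail g)" using z(1) unfolding omega_ft .
      then obtain a where a: "a \<in> ftail g" "(stp X V)\<^sup>*\<^sup>* a z"
        using hull_R[OF fin mvf, of "ftail g"] ftail_range[of g] rt by blast
      obtain u where u: "u \<ge> s1" "g u = a" using a(1) unfolding ftail_char by blast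
      have "(stp X V)\<^sup>*\<^sup>* (g s1) (g u)" by (rule reach_fs[OF fs u(1)])
      then have "(stp X V)\<^sup>*\<^sup>* b a" using s1 u(2) by simp
      then have "(stp X V)\<^sup>*\<^sup>* y z" using b(2) a(2) by (meson rtranclp_trans)
      then show "rel q p" using linkrel[OF adm, of y p z q] y z unfolding M'_def by simp
    qed
  qed
  have M'eq: "M' = (\<lambda>p. M_Q X V P M {p})" by (rule ext) (simp add: M'_def)
  have "morse_decomposition X V P M'"
    unfolding morse_decomposition_def using pre sat adm' po by blast
  then show ?thesis unfolding M'eq .
qed

end
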